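(* Let $f(x_1,\dots,x_M)=\sum_{\mathbf i\in\mathscr S}p_{\mathbf i}f_{i_1}(x_1)\cdots f_{i_M}(x_M)$ be an $\mathrm{MMEam}$ density and fix $\mathbf z=(z_1,\dots,z_M)\in[0,\infty)^M$ with $\overline F(z_1,\dots,z_M)=\int_{z_1}^\infty\cdots\int_{z_M}^\infty f(y_1,\dots,y_M)\,dy_1\cdots dy_M>0$. Then the residual lifetime density $f^{\mathrm{RL}}_{\mathbf z}(x_1,\dots,x_M)=f(x_1+z_1,\dots,x_M+z_M)/\overline F(z_1,\dots,z_M)$, $x_k\ge0$, belongs to $\mathrm{MMEam}$ and $$f^{\mathrm{RL}}_{\mathbf z}(x_1,\dots,x_M)=\sum_{\mathbf i\in\mathscr S}p^{\mathrm{RL}}_{\mathbf z,\mathbf i}f^{\mathrm{RL}}_{z_1,i_1}(x_1)\cdots f^{\mathrm{RL}}_{z_M,i_M}(x_M),$$ where for $z\ge0$ and $1\le j\le L$, $$f^{\mathrm{RL}}_{z,j}(x)=\alpha^{\mathrm{RL}}_{z,j}e^{T_jx}t_j,\qquad \alpha^{\mathrm{RL}}_{z,j}=\frac{1}{\alpha_je^{T_jz}l_j}\,\alpha_je^{T_jz},$$ and $$p^{\mathrm{RL}}_{\mathbf z,\mathbf i}=\frac{p_{\mathbf i}\,(\alpha_{i_1}e^{T_{i_1}z_1}l_{i_1})\cdots(\alpha_{i_M}e^{T_{i_M}z_M}l_{i_M})}{\sum_{\mathbf h\in\mathscr S}p_{\mathbf h}\,(\alpha_{h_1}e^{T_{h_1}z_1}l_{h_1})\cdots(\alpha_{h_M}e^{T_{h_M}z_M}l_{h_M})},$$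 with $l_j=(-T_j)^{-1}t_j$.
   Context: An ME density is a probability density on $[0,\infty)$ of the form $g(x)=\alpha e^{Tx}t$ ($\alpha$ real row vector, $T$ real square matrix, $t$ real column vector); triples are taken with all eigenvalues of $T$ having strictly negative real part, so $T$ is invertible and with $l=(-T)^{-1}t$ the survival function is $\alpha e^{Tx}l$. MMEam: fix $L,M\in\mathbb N_+$ and ME densities $f_1,\dots,f_L$ with triples $(\alpha_j,T_j,t_j)$. Let $\mathscr S=\{1,\dots,L\}^M$, $\mathbf i=(i_1,\dots,i_M)$, and real numbers $p_{\mathbf i}$ (possibly negative) with $\sum p_{\mathbf i}=1$. Then $f(x_1,\dots,x_M)=\sum_{\mathbf i}p_{\mathbf i}f_{i_1}(x_1)\cdots f_{i_M}(x_M)$ on $[0,\infty)^M$ is an MMEam density if $f\ge0$; $\mathrm{MMEam}$ is the class of such densities. *)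

theory Defs
  imports "HOL-Analysis.Analysis" "Jordan_Normal_Form.Char_Poly" "Jordan_Normal_Form.Gauss_Jordan_Elimination"
begin

definition mat_exp :: "real mat \<Rightarrow> real mat" where
  "mat_exp A = mat (dim_row A) (dim_col A)
     (\<lambda>(i,j). \<Sum>k. ((1 / fact k) \<cdot>\<^sub>m (A ^\<^sub>m k)) $$ (i,j))"

definition vec_mat :: "real vec \<Rightarrow> real mat \<Rightarrow> real vec" where
  "vec_mat v A = vec (dim_col A) (\<lambda>j. scalar_prod v (col A j))"

definition ME_triple :: "nat \<Rightarrow> real vec \<Rightarrow> real mat \<Rightarrow> real vec \<Rightarrow> bool" where
  "ME_triple n \<alpha> T t \<longleftrightarrow> \<alpha> \<in> carrier_vec n \<and> T \<in> carrier_mat n n \<and> t \<in> carrier_vec n \<and>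
     (\<forall>c. eigenvalue (map_mat complex_of_real T) c \<longrightarrow> Re c < 0)"

definition ME_fun :: "real vec \<Rightarrow> real mat \<Rightarrow> real vec \<Rightarrow> real \<Rightarrow> real" where
  "ME_fun \<alpha> T t x = scalar_prod \<alpha> (mat_exp (x \<cdot>\<^sub>m T) *\<^sub>v t)"

definition ME_l :: "real mat \<Rightarrow> real vec \<Rightarrow> real vec" where
  "ME_l T t = the (mat_inverse (- T)) *\<^sub>v t"

definition ME_density_triple :: "nat \<Rightarrow> real vec \<Rightarrow> real mat \<Rightarrow> real vec \<Rightarrow> bool" where
  "ME_density_triple n \<alpha> T t \<longleftrightarrow> ME_triple n \<alpha> T t \<and>
     (\<forall>x\<ge>0. ME_fun \<alpha> T t x \<ge> 0) \<and> (ME_fun \<alpha> T t has_integral 1) {0..}"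

definition ME_density :: "(real \<Rightarrow> real) \<Rightarrow> bool" where
  "ME_density g \<longleftrightarrow> (\<exists>n \<alpha> T t. ME_density_triple n \<alpha> T t \<and> (\<forall>x\<ge>0. g x = ME_fun \<alpha> T t x))"

text \<open>Index set S = {1..L}^M, multi-indices as functions on {0..<M}.\<close>
definition idx_set :: "nat \<Rightarrow> nat \<Rightarrow> (nat \<Rightarrow> nat) set" where
  "idx_set L M = PiE {..<M} (\<lambda>_. {1..L})"

text \<open>Points of [0,\<infinity>)^M, represented as nat \<Rightarrow> real on the coordinates 0..<M.\<close>
definition nonneg_pt :: "nat \<Rightarrow> (nat \<Rightarrow> real) \<Rightarrow> bool" where
  "nonneg_pt M x \<longleftrightarrow> (\<forall>k<M. 0 \<le> x k)"

definition MMEam :: "nat \<Rightarrow> ((nat \<Rightarrow> real) \<Rightarrow> real) \<Rightarrow> bool" where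
  "MMEam M f \<longleftrightarrow> (\<exists>L (g :: nat \<Rightarrow> real \<Rightarrow> real) (p :: (nat \<Rightarrow> nat) \<Rightarrow> real).
     1 \<le> L \<and> (\<forall>j\<in>{1..L}. ME_density (g j)) \<and> (\<Sum>i\<in>idx_set L M. p i) = 1 \<and>
     (\<forall>x. nonneg_pt M x \<longrightarrow> f x = (\<Sum>i\<in>idx_set L M. p i * (\<Prod>k<M. g (i k) (x k)))) \<and>
     (\<forall>x. nonneg_pt M x \<longrightarrow> 0 \<le> f x))"

end

theory Submission
  imports Defs "Jordan_Normal_Form.Spectral_Radius" "HOL-Real_Asymp.Real_Asymp"
begin


definition ecoef :: "'a::{real_normed_field,banach} mat \<Rightarrow> nat \<Rightarrow> nat \<Rightarrow> nat \<Rightarrow> 'a" where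
  "ecoef A i j k = (A ^\<^sub>m k) $$ (i,j) / fact k"

definition mexp :: "'a::{real_normed_field,banach} mat \<Rightarrow> 'a \<Rightarrow> 'a mat" where
  "mexp A s = mat (dim_row A) (dim_col A) (\<lambda>(i,j). \<Sum>k. ecoef A i j k * s ^ k)"

lemma mult_index: assumes "A \<in> carrier_mat n m" "B \<in> carrier_mat m n'" "i < n" "j < n'"
  shows "(A * B) $$ (i,j) = (\<Sum>l<m. A $$ (i,l) * B $$ (l,j))"
  using assms by (auto simp: scalar_prod_def atLeast0LessThan intro!: sum.cong)

lemma mexp_carrier[simp]: "A \<in> carrier_mat n n \<Longrightarrow> mexp A s \<in> carrier_mat n n"
  unfolding mexp_def by auto

lemma mexp_dim[simp]: "dim_row (mexp A s) = dim_row A" "dim_col (mexp A s) = dim_col A"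
  unfolding mexp_def by auto

lemma mexp_index: "A \<in> carrier_mat n n \<Longrightarrow> i < n \<Longrightarrow> j < n \<Longrightarrow> mexp A s $$ (i,j) = (\<Sum>k. ecoef A i j k * s ^ k)"
  unfolding mexp_def by auto

lemma pow_norm_bound:
  fixes A :: "'a::{real_normed_field,banach} mat"
  assumes A: "A \<in> carrier_mat n n"
  shows "\<exists>c\<ge>1. \<forall>k i j. i < n \<longrightarrow> j < n \<longrightarrow> norm ((A ^\<^sub>m k) $$ (i,j)) \<le> c ^ k"
proof -
  obtain b where b: "norm_bound A b" using norm_bound_max by blast
  define b' where "b' = max b 0"
  have b': "norm_bound A b'" using b unfolding norm_bound_def b'_def by force
  define c where "c = max 1 (b' * real n)"
  have c1: "c \<ge> 1" unfolding c_def by auto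
  have "norm_bound (A ^\<^sub>m k) (c ^ k)" for k
  proof (induct k)
    case 0
    show ?case using A unfolding norm_bound_def by (auto simp: one_mat_def)
  next
    case (Suc k)
    have "norm_bound (A ^\<^sub>m k * A) (c ^ k * b' * of_nat n)"
      by (rule norm_bound_mult[OF pow_carrier_mat[OF A] A Suc b'])
    moreover have "c ^ k * b' * of_nat n \<le> c ^ Suc k"
    proof -
      have "b' * real n \<le> c" unfolding c_def by auto
      moreover have "c ^ k \<ge> 0" using c1 by auto
      ultimately have "c ^ k * (b' * real n) \<le> c ^ k * c" by (metis mult_left_mono)
      moreover have "c ^ k * b' * of_nat n = c ^ k * (b' * real n)" by (simp add: mult.assoc)
      moreover have "c ^ Suc k = c ^ k * c" by (rule power_Suc2)
      ultimately show ?thesis by (simp only:)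
    qed
    ultimately show ?case unfolding norm_bound_def by (auto intro: order_trans)
  qed
  thus ?thesis using c1 A unfolding norm_bound_def by (intro exI[of _ c]) auto
qed

lemma ecoef_summable_norm:
  fixes A :: "'a::{real_normed_field,banach} mat"
  assumes A: "A \<in> carrier_mat n n" and i: "i < n" and j: "j < n"
  shows "summable (\<lambda>k. norm (ecoef A i j k * s ^ k))"
proof -
  obtain c where c1: "c \<ge> 1" and c: "\<And>k. norm ((A ^\<^sub>m k) $$ (i,j)) \<le> c ^ k"
    using pow_norm_bound[OF A] i j by blast
  have sum: "summable (\<lambda>k. inverse (fact k) * (c * norm s) ^ k)" by (rule summable_exp)
  show ?thesis
  proof (rule summable_comparison_test'[OF sum])
    fix k
    have "norm (norm (ecoef A i j k * s ^ k)) = norm ((A ^\<^sub>m k) $$ (i,j)) / fact k * norm s ^ k"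
      unfolding ecoef_def by (simp add: norm_mult norm_divide norm_power)
    also have "\<dots> \<le> c ^ k / fact k * norm s ^ k"
      by (intro mult_right_mono divide_right_mono c) auto
    also have "\<dots> = inverse (fact k) * (c * norm s) ^ k"
      by (simp add: power_mult_distrib field_simps)
    finally show "norm (norm (ecoef A i j k * s ^ k)) \<le> inverse (fact k) * (c * norm s) ^ k" .
  qed
qed

lemma ecoef_summable:
  fixes A :: "'a::{real_normed_field,banach} mat"
  assumes A: "A \<in> carrier_mat n n" and i: "i < n" and j: "j < n"
  shows "summable (\<lambda>k. ecoef A i j k * s ^ k)"
  by (rule summable_norm_cancel[OF ecoef_summable_norm[OF assms]])

lemma pow_comm:
  fixes A B :: "'a::semiring_1 mat"
  assumes A: "A \<in> carrier_mat n n" and B: "B \<in> carrier_mat n n" and AB: "A * B = B * A"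
  shows "A ^\<^sub>m k * B = B * A ^\<^sub>m k"
proof (induct k)
  case 0 then show ?case using A B by simp
next
  case (Suc k)
  have "A ^\<^sub>m Suc k * B = A ^\<^sub>m k * (A * B)" using A B by (simp add: assoc_mult_mat[of _ n n _ n _ n])
  also have "\<dots> = (A ^\<^sub>m k * B) * A" using A B AB by (simp add: assoc_mult_mat[of _ n n _ n _ n])
  also have "\<dots> = B * A ^\<^sub>m Suc k" using A B Suc by (simp add: assoc_mult_mat[of _ n n _ n _ n])
  finally show ?case .
qed

lemma mexp_mult_right_index:
  fixes A B :: "'a::{real_normed_field,banach} mat"
  assumes A: "A \<in> carrier_mat n n" and B: "B \<in> carrier_mat n n" and i: "i < n" and j: "j < n"
  shows "(mexp A s * B) $$ (i,j) = (\<Sum>k. (A ^\<^sub>m k * B) $$ (i,j) / fact k * s ^ k)"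
proof -
  have "(mexp A s * B) $$ (i,j) = (\<Sum>m<n. mexp A s $$ (i,m) * B $$ (m,j))"
    by (rule mult_index[OF mexp_carrier[OF A] B i j])
  also have "\<dots> = (\<Sum>m<n. \<Sum>k. ecoef A i m k * s ^ k * B $$ (m,j))"
    using A i by (intro sum.cong refl) (simp add: mexp_index[OF A] suminf_mult2[OF ecoef_summable[OF A]])
  also have "\<dots> = (\<Sum>k. \<Sum>m<n. ecoef A i m k * s ^ k * B $$ (m,j))"
    using A i by (intro suminf_sum[symmetric] summable_mult2 ecoef_summable[OF A]) auto
  also have "\<dots> = (\<Sum>k. (A ^\<^sub>m k * B) $$ (i,j) / fact k * s ^ k)"
  proof (rule suminf_cong)
    fix k
    have "(A ^\<^sub>m k * B) $$ (i,j) = (\<Sum>m<n. (A ^\<^sub>m k) $$ (i,m) * B $$ (m,j))"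
      by (rule mult_index[OF pow_carrier_mat[OF A] B i j])
    thus "(\<Sum>m<n. ecoef A i m k * s ^ k * B $$ (m,j)) = (A ^\<^sub>m k * B) $$ (i,j) / fact k * s ^ k"
      unfolding ecoef_def by (simp add: sum_distrib_left sum_divide_distrib ac_simps)
  qed
  finally show ?thesis .
qed

lemma mexp_mult_left_index:
  fixes A B :: "'a::{real_normed_field,banach} mat"
  assumes A: "A \<in> carrier_mat n n" and B: "B \<in> carrier_mat n n" and i: "i < n" and j: "j < n"
  shows "(B * mexp A s) $$ (i,j) = (\<Sum>k. (B * A ^\<^sub>m k) $$ (i,j) / fact k * s ^ k)"
proof -
  have "(B * mexp A s) $$ (i,j) = (\<Sum>m<n. B $$ (i,m) * mexp A s $$ (m,j))"
    by (rule mult_index[OF B mexp_carrier[OF A] i j])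
  also have "\<dots> = (\<Sum>m<n. \<Sum>k. B $$ (i,m) * (ecoef A m j k * s ^ k))"
    using A j by (intro sum.cong refl) (simp add: mexp_index[OF A] suminf_mult[OF ecoef_summable[OF A]])
  also have "\<dots> = (\<Sum>k. \<Sum>m<n. B $$ (i,m) * (ecoef A m j k * s ^ k))"
    using A j by (intro suminf_sum[symmetric] summable_mult ecoef_summable[OF A]) auto
  also have "\<dots> = (\<Sum>k. (B * A ^\<^sub>m k) $$ (i,j) / fact k * s ^ k)"
  proof (rule suminf_cong)
    fix k
    have "(B * A ^\<^sub>m k) $$ (i,j) = (\<Sum>m<n. B $$ (i,m) * (A ^\<^sub>m k) $$ (m,j))"
      by (rule mult_index[OF B pow_carrier_mat[OF A] i j])
    thus "(\<Sum>m<n. B $$ (i,m) * (ecoef A m j k * s ^ k)) = (B * A ^\<^sub>m k) $$ (i,j) / fact k * s ^ k"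
      unfolding ecoef_def by (simp add: sum_distrib_left sum_divide_distrib ac_simps)
  qed
  finally show ?thesis .
qed

lemma mexp_comm:
  fixes A B :: "'a::{real_normed_field,banach} mat"
  assumes A: "A \<in> carrier_mat n n" and B: "B \<in> carrier_mat n n" and AB: "A * B = B * A"
  shows "mexp A s * B = B * mexp A s"
proof (rule eq_matI)
  fix i j assume "i < dim_row (B * mexp A s)" "j < dim_col (B * mexp A s)"
  hence ij: "i < n" "j < n" using A B by auto
  show "(mexp A s * B) $$ (i,j) = (B * mexp A s) $$ (i,j)"
    unfolding mexp_mult_right_index[OF A B ij] mexp_mult_left_index[OF A B ij] pow_comm[OF A B AB] ..
qed (use A B in auto)

lemma mexp_deriv:
  fixes A :: "'a::{real_normed_field,banach} mat"
  assumes A: "A \<in> carrier_mat n n" and i: "i < n" and j: "j < n"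
  shows "((\<lambda>s. mexp A s $$ (i,j)) has_field_derivative (mexp A s * A) $$ (i,j)) (at s)"
proof -
  have eq: "(\<lambda>s. mexp A s $$ (i,j)) = (\<lambda>s. \<Sum>k. ecoef A i j k * s ^ k)"
    using mexp_index[OF A i j] by auto
  have d: "((\<lambda>s. \<Sum>k. ecoef A i j k * s ^ k) has_field_derivative (\<Sum>k. diffs (ecoef A i j) k * s ^ k)) (at s)"
    by (rule termdiffs_strong_converges_everywhere, rule ecoef_summable[OF A i j])
  have "(\<Sum>k. diffs (ecoef A i j) k * s ^ k) = (\<Sum>k. (A ^\<^sub>m k * A) $$ (i,j) / fact k * s ^ k)"
  proof (rule suminf_cong)
    fix k
    show "diffs (ecoef A i j) k * s ^ k = (A ^\<^sub>m k * A) $$ (i,j) / fact k * s ^ k"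
      unfolding diffs_def ecoef_def by (simp add: fact_Suc del: of_nat_Suc)
  qed
  also have "\<dots> = (mexp A s * A) $$ (i,j)" by (rule mexp_mult_right_index[OF A A i j, symmetric])
  finally show ?thesis using d eq by simp
qed

lemma mexp_zero: "A \<in> carrier_mat n n \<Longrightarrow> mexp A 0 = 1\<^sub>m n"
  by (rule eq_matI, auto simp: mexp_index powser_zero, auto simp: ecoef_def mexp_def)



lemma mexp_deriv_left:
  fixes A :: "'a::{real_normed_field,banach} mat"
  assumes A: "A \<in> carrier_mat n n" and i: "i < n" and j: "j < n"
  shows "((\<lambda>s. mexp A s $$ (i,j)) has_field_derivative (A * mexp A s) $$ (i,j)) (at s)"
  using mexp_deriv[OF A i j, of s] mexp_comm[OF A A refl, of s] by simp

lemma mat_mult_deriv: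
  fixes F G :: "'a::{real_normed_field,banach} \<Rightarrow> 'a mat"
  assumes F: "\<And>x. F x \<in> carrier_mat n n" and G: "\<And>x. G x \<in> carrier_mat n n"
    and F': "F' \<in> carrier_mat n n" and G': "G' \<in> carrier_mat n n"
    and dF: "\<And>i j. i < n \<Longrightarrow> j < n \<Longrightarrow> ((\<lambda>x. F x $$ (i,j)) has_field_derivative F' $$ (i,j)) (at x)"
    and dG: "\<And>i j. i < n \<Longrightarrow> j < n \<Longrightarrow> ((\<lambda>x. G x $$ (i,j)) has_field_derivative G' $$ (i,j)) (at x)"
    and i: "i < n" and j: "j < n"
  shows "((\<lambda>x. (F x * G x) $$ (i,j)) has_field_derivative (F' * G x + F x * G') $$ (i,j)) (at x)"
proof -
  have eq: "(\<lambda>x. (F x * G x) $$ (i,j)) = (\<lambda>x. \<Sum>m<n. F x $$ (i,m) * G x $$ (m,j))"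
    using mult_index[OF F G i j] by auto
  have d: "((\<lambda>x. \<Sum>m<n. F x $$ (i,m) * G x $$ (m,j)) has_field_derivative
      (\<Sum>m<n. F' $$ (i,m) * G x $$ (m,j) + G' $$ (m,j) * F x $$ (i,m))) (at x)"
    by (intro DERIV_sum DERIV_mult dF dG i j) auto
  have "(F' * G x + F x * G') $$ (i,j) = (F' * G x) $$ (i,j) + (F x * G') $$ (i,j)"
    by (subst index_add_mat) (use F[of x] G[of x] F' G' i j in auto)
  also have "\<dots> = (\<Sum>m<n. F' $$ (i,m) * G x $$ (m,j) + G' $$ (m,j) * F x $$ (i,m))"
    unfolding mult_index[OF F' G i j] mult_index[OF F G' i j] sum.distrib by (simp add: ac_simps)
  finally show ?thesis using d eq by simp
qed

lemma zero_deriv_const: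
  fixes f :: "'a::{real_normed_field,banach} \<Rightarrow> 'a"
  assumes "\<And>x. (f has_field_derivative 0) (at x)"
  shows "f x = f y"
proof -
  obtain c where "\<forall>x\<in>UNIV. f x = c"
    using has_field_derivative_zero_constant[of UNIV f] assms by auto
  thus ?thesis by auto
qed

lemma mexp_add:
  fixes A :: "'a::{real_normed_field,banach} mat"
  assumes A: "A \<in> carrier_mat n n"
  shows "mexp A (a + b) = mexp A a * mexp A b"
proof -
  define c where "c = a + b"
  define K where "K x = mexp A x * mexp A (c - x)" for x
  have const: "K x $$ (i,j) = K y $$ (i,j)" if i: "i < n" and j: "j < n" for x y i j
  proof (rule zero_deriv_const[where f="\<lambda>x. K x $$ (i,j)"])
    fix x
    have dG: "((\<lambda>x. mexp A (c - x) $$ (i,j)) has_field_derivative (- (A * mexp A (c - x))) $$ (i,j)) (at x)"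
      if "i < n" "j < n" for i j
    proof -
      have "((\<lambda>x. mexp A (c - x) $$ (i,j)) has_field_derivative (A * mexp A (c - x)) $$ (i,j) * (-1)) (at x)"
        by (rule DERIV_chain2[OF mexp_deriv_left[OF A that]]) (auto intro!: derivative_eq_intros)
      thus ?thesis using A that by simp
    qed
    have "((\<lambda>x. K x $$ (i,j)) has_field_derivative
       (mexp A x * A * mexp A (c - x) + mexp A x * (- (A * mexp A (c - x)))) $$ (i,j)) (at x)"
      unfolding K_def
      by (rule mat_mult_deriv[OF mexp_carrier[OF A] mexp_carrier[OF A] _ _ mexp_deriv[OF A] dG i j])
        (use A in auto)
    moreover have "(mexp A x * A * mexp A (c - x) + mexp A x * (- (A * mexp A (c - x)))) $$ (i,j) = 0"
    proof -
      have e: "mexp A x * A * mexp A (c - x) = mexp A x * (A * mexp A (c - x))"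
        using A by (intro assoc_mult_mat[of _ n n _ n _ n]) auto
      show ?thesis using e A i j
        by (simp add: mult_index[of _ n n _ n] sum_negf[symmetric])
    qed
    ultimately show "((\<lambda>x. K x $$ (i,j)) has_field_derivative 0) (at x)" by simp
  qed
  show ?thesis
  proof (rule eq_matI)
    fix i j assume "i < dim_row (mexp A a * mexp A b)" "j < dim_col (mexp A a * mexp A b)"
    hence ij: "i < n" "j < n" using A by auto
    have "K 0 $$ (i,j) = K a $$ (i,j)" by (rule const[OF ij])
    thus "mexp A (a + b) $$ (i,j) = (mexp A a * mexp A b) $$ (i,j)"
      unfolding K_def c_def using A ij by (simp add: mexp_zero)
  qed (use A in auto)
qed

lemma mexp_inv: "A \<in> carrier_mat n n \<Longrightarrow> mexp A (- x) * mexp A x = 1\<^sub>m n"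
  using mexp_add[of A n "-x" x] by (simp add: mexp_zero)

lemma ode_unique:
  fixes M :: "'a::{real_normed_field,banach} mat"
  assumes M: "M \<in> carrier_mat n n" and Y: "\<And>x. Y x \<in> carrier_mat n n"
    and dY: "\<And>x i j. i < n \<Longrightarrow> j < n \<Longrightarrow> ((\<lambda>x. Y x $$ (i,j)) has_field_derivative (M * Y x) $$ (i,j)) (at x)"
    and Y0: "Y 0 = 1\<^sub>m n"
  shows "Y x = mexp M x"
proof -
  define K where "K x = mexp M (- x) * Y x" for x
  have const: "K x $$ (i,j) = K y $$ (i,j)" if i: "i < n" and j: "j < n" for x y i j
  proof (rule zero_deriv_const[where f="\<lambda>x. K x $$ (i,j)"])
    fix x
    have dF: "((\<lambda>x. mexp M (- x) $$ (i,j)) has_field_derivative (- (mexp M (- x) * M)) $$ (i,j)) (at x)"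
      if "i < n" "j < n" for i j
    proof -
      have "((\<lambda>x. mexp M (- x) $$ (i,j)) has_field_derivative (mexp M (- x) * M) $$ (i,j) * (-1)) (at x)"
        by (rule DERIV_chain2[OF mexp_deriv[OF M that]]) (auto intro!: derivative_eq_intros)
      thus ?thesis using M that by simp
    qed
    have "((\<lambda>x. K x $$ (i,j)) has_field_derivative
       ((- (mexp M (- x) * M)) * Y x + mexp M (- x) * (M * Y x)) $$ (i,j)) (at x)"
      unfolding K_def
      by (rule mat_mult_deriv[OF mexp_carrier[OF M] Y _ _ dF dY i j]) (use M Y in auto)
    moreover have "((- (mexp M (- x) * M)) * Y x + mexp M (- x) * (M * Y x)) $$ (i,j) = 0"
    proof -
      have e: "mexp M (- x) * (M * Y x) = mexp M (- x) * M * Y x"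
        using M Y by (intro assoc_mult_mat[of _ n n _ n _ n, symmetric]) auto
      show ?thesis using e M Y[of x] i j
        by (simp add: mult_index[of _ n n _ n] sum_negf[symmetric])
    qed
    ultimately show "((\<lambda>x. K x $$ (i,j)) has_field_derivative 0) (at x)" by simp
  qed
  have K1: "K x = 1\<^sub>m n"
  proof (rule eq_matI)
    fix i j assume "i < dim_row (1\<^sub>m n :: 'a mat)" "j < dim_col (1\<^sub>m n :: 'a mat)"
    hence ij: "i < n" "j < n" by auto
    have "K x $$ (i,j) = K 0 $$ (i,j)" by (rule const[OF ij])
    thus "K x $$ (i,j) = 1\<^sub>m n $$ (i,j)" unfolding K_def using M ij Y0 by (simp add: mexp_zero)
  qed (use M Y in \<open>auto simp: K_def\<close>)
  have "Y x = (mexp M x * mexp M (- x)) * Y x"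
    using mexp_inv[OF M, of "- x"] Y[of x] by simp
  also have "\<dots> = mexp M x * K x" unfolding K_def
    using M Y by (intro assoc_mult_mat[of _ n n _ n _ n]) auto
  also have "\<dots> = mexp M x" using K1 M by simp
  finally show ?thesis .
qed




lemma exp_decay_tendsto:
  fixes a C :: real assumes a: "a > 0"
  shows "((\<lambda>x. C * exp (- a * x)) \<longlongrightarrow> 0) at_top"
proof -
  have "filterlim (\<lambda>x. a * x) at_top at_top"
    by (rule filterlim_tendsto_pos_mult_at_top[OF tendsto_const a filterlim_ident])
  hence "filterlim (\<lambda>x. - (a * x)) at_bot at_top"
    by (rule filterlim_compose[OF filterlim_uminus_at_bot_at_top])
  hence "((\<lambda>x. exp (- (a * x))) \<longlongrightarrow> 0) at_top"
    by (rule filterlim_compose[OF exp_at_bot])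
  thus ?thesis by (intro tendsto_mult_right_zero) simp
qed

lemma mexp_of_real_index:
  fixes T :: "real mat"
  assumes T: "T \<in> carrier_mat n n" and i: "i < n" and j: "j < n"
  shows "complex_of_real (mexp T x $$ (i,j)) = mexp (map_mat complex_of_real T) (complex_of_real x) $$ (i,j)"
proof -
  have Tc: "map_mat complex_of_real T \<in> carrier_mat n n" using T by simp
  have "complex_of_real (mexp T x $$ (i,j)) = (\<Sum>k. complex_of_real (ecoef T i j k * x ^ k))"
    unfolding mexp_index[OF T i j] by (rule suminf_of_real[OF ecoef_summable[OF T i j]])
  also have "\<dots> = (\<Sum>k. ecoef (map_mat complex_of_real T) i j k * complex_of_real x ^ k)"
  proof (rule suminf_cong)
    fix k
    have "map_mat complex_of_real T ^\<^sub>m k = map_mat complex_of_real (T ^\<^sub>m k)"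
      by (rule of_real_hom.mat_hom_pow[OF T, symmetric])
    thus "complex_of_real (ecoef T i j k * x ^ k) = ecoef (map_mat complex_of_real T) i j k * complex_of_real x ^ k"
      unfolding ecoef_def using T i j by simp
  qed
  also have "\<dots> = mexp (map_mat complex_of_real T) (complex_of_real x) $$ (i,j)"
    by (rule mexp_index[OF Tc i j, symmetric])
  finally show ?thesis .
qed

lemma mexp_growth_bound:
  fixes B :: "complex mat"
  assumes B: "B \<in> carrier_mat n n" and i: "i < n" and j: "j < n"
    and C: "\<And>k. norm_bound (B ^\<^sub>m k) C" and y: "y \<ge> 0"
  shows "norm (mexp B (complex_of_real y) $$ (i,j)) \<le> C * exp y"
proof -
  have C': "norm ((B ^\<^sub>m k) $$ (i,j)) \<le> C" for k
    using C[of k] B i j unfolding norm_bound_def by auto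
  have sums: "(\<lambda>k. C * (y ^ k /\<^sub>R fact k)) sums (C * exp y)"
    by (rule sums_mult[OF exp_converges])
  have "norm (mexp B (complex_of_real y) $$ (i,j)) = norm (\<Sum>k. ecoef B i j k * complex_of_real y ^ k)"
    unfolding mexp_index[OF B i j] ..
  also have "\<dots> \<le> (\<Sum>k. C * (y ^ k /\<^sub>R fact k))"
  proof (rule norm_suminf_le)
    fix k
    have "norm (ecoef B i j k * complex_of_real y ^ k) = norm ((B ^\<^sub>m k) $$ (i,j)) / fact k * y ^ k"
      unfolding ecoef_def using y by (simp add: norm_mult norm_divide norm_power)
    also have "\<dots> \<le> C / fact k * y ^ k"
      using y by (intro mult_right_mono divide_right_mono C') auto
    also have "\<dots> = C * (y ^ k /\<^sub>R fact k)" by (simp add: field_simps)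
    finally show "norm (ecoef B i j k * complex_of_real y ^ k) \<le> C * (y ^ k /\<^sub>R fact k)" .
  qed (use sums in \<open>rule sums_summable\<close>)
  also have "\<dots> = C * exp y" using sums by (rule sums_unique[symmetric])
  finally show ?thesis .
qed

lemma choose_h:
  fixes S :: "complex set"
  assumes fin: "finite S" and neg: "\<And>l. l \<in> S \<Longrightarrow> Re l < 0"
  shows "\<exists>h r. h > 0 \<and> 0 < r \<and> r < 1 \<and> (\<forall>l\<in>S. cmod (1 + complex_of_real h * l) < r)"
proof -
  define h where "h = Min (insert 1 ((\<lambda>l. - Re l / (cmod l)^2) ` S))"
  have pos: "- Re l / (cmod l)^2 > 0" if "l \<in> S" for l
  proof -
    have "Re l < 0" using neg that by auto
    hence "l \<noteq> 0" by auto
    hence "(cmod l)^2 > 0" by auto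
    with \<open>Re l < 0\<close> have "Re l / (cmod l)^2 < 0" by (intro divide_neg_pos)
    thus ?thesis by simp
  qed
  have h0: "h > 0" unfolding h_def using fin pos by (subst Min_gr_iff) auto
  have hle: "h \<le> - Re l / (cmod l)^2" if "l \<in> S" for l
    unfolding h_def using fin that by (intro Min_le) auto
  have lt1: "cmod (1 + complex_of_real h * l) < 1" if l: "l \<in> S" for l
  proof -
    have Rl: "Re l < 0" using neg l by auto
    hence "l \<noteq> 0" by auto
    hence cl: "(cmod l)^2 > 0" by auto
    have "h * (cmod l)^2 \<le> (- Re l / (cmod l)^2) * (cmod l)^2"
      by (rule mult_right_mono[OF hle[OF l]]) simp
    also have "\<dots> = - Re l" using cl by simp
    finally have "h * (cmod l)^2 \<le> - Re l" .
    hence "h * (h * (cmod l)^2) \<le> h * (- Re l)" using h0 by (intro mult_left_mono) auto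
    have e1: "Re (1 + complex_of_real h * l) = 1 + h * Re l" by simp
    have e2: "Im (1 + complex_of_real h * l) = h * Im l" by simp
    have "(cmod (1 + complex_of_real h * l))^2 = (1 + h * Re l)^2 + (h * Im l)^2"
      by (simp only: cmod_power2 e1 e2)
    also have "\<dots> = 1 + 2 * h * Re l + h * (h * ((Re l)^2 + (Im l)^2))"
      by (simp add: power2_eq_square algebra_simps)
    also have "(Re l)^2 + (Im l)^2 = (cmod l)^2" by (rule cmod_power2[symmetric])
    finally have eq: "(cmod (1 + complex_of_real h * l))^2 = 1 + 2 * h * Re l + h * (h * (cmod l)^2)" .
    have "h * Re l < 0" using h0 Rl by (rule mult_pos_neg)
    hence "(cmod (1 + complex_of_real h * l))^2 < 1^2"
      unfolding eq using \<open>h * (h * (cmod l)^2) \<le> h * (- Re l)\<close> by simp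
    thus ?thesis by (rule power_less_imp_less_base) simp
  qed
  define r0 where "r0 = Max (insert (1/2) ((\<lambda>l. cmod (1 + complex_of_real h * l)) ` S))"
  have r0: "r0 < 1" unfolding r0_def using fin lt1 by (subst Max_less_iff) auto
  have r0ge: "cmod (1 + complex_of_real h * l) \<le> r0" if "l \<in> S" for l
    unfolding r0_def using fin that by (intro Max_ge) auto
  have r0h: "r0 \<ge> 1/2" unfolding r0_def using fin by (intro Max_ge) auto
  show ?thesis
  proof (intro exI conjI ballI)
    show "h > 0" by (rule h0)
    show "0 < (1 + r0) / 2" using r0h by simp
    show "(1 + r0) / 2 < 1" using r0 by simp
    fix l assume "l \<in> S"
    from r0ge[OF this] r0 show "cmod (1 + complex_of_real h * l) < (1 + r0) / 2" by simp
  qed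
qed

lemma mexp_decay:
  fixes T :: "real mat"
  assumes T: "T \<in> carrier_mat n n"
    and eig: "\<And>c. eigenvalue (map_mat complex_of_real T) c \<Longrightarrow> Re c < 0"
    and i: "i < n" and j: "j < n"
  shows "((\<lambda>x. mexp T x $$ (i,j)) \<longlongrightarrow> 0) at_top"
proof -
  define Tc where "Tc = map_mat complex_of_real T"
  have Tc: "Tc \<in> carrier_mat n n" unfolding Tc_def using T by simp
  have n: "n > 0" using i by auto
  obtain h r where h: "h > 0" and r0: "0 < r" and r1: "r < 1"
    and hr: "\<And>l. l \<in> spectrum Tc \<Longrightarrow> cmod (1 + complex_of_real h * l) < r"
    using choose_h[OF card_finite_spectrum(1)[OF Tc]] eig unfolding spectrum_def Tc_def by blast
  define hc where "hc = complex_of_real h"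
  define rc where "rc = complex_of_real r"
  have hc0: "hc \<noteq> 0" and rc0: "rc \<noteq> 0" using h r0 unfolding hc_def rc_def by auto
  define B where "B = mat n n (\<lambda>(i,j). ((if i = j then 1 else 0) + hc * Tc $$ (i,j)) / rc)"
  have B: "B \<in> carrier_mat n n" unfolding B_def by simp
  have Bv: "(B *\<^sub>v v) $ i = (v $ i + hc * (Tc *\<^sub>v v) $ i) / rc" if v: "v \<in> carrier_vec n" and i: "i < n" for v i
  proof -
    have "(B *\<^sub>v v) $ i = (\<Sum>m<n. ((if i = m then 1 else 0) + hc * Tc $$ (i,m)) / rc * v $ m)"
      using v i unfolding B_def by (simp add: scalar_prod_def atLeast0LessThan)
    also have "\<dots> = (\<Sum>m<n. (if i = m then v $ m / rc else 0) + hc * (Tc $$ (i,m) * v $ m) / rc)"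
      using rc0 by (intro sum.cong) (auto simp: field_simps)
    also have "\<dots> = v $ i / rc + hc * (\<Sum>m<n. Tc $$ (i,m) * v $ m) / rc"
      using i by (simp add: sum.distrib sum_divide_distrib sum_distrib_left)
    also have "\<dots> = (v $ i + hc * (Tc *\<^sub>v v) $ i) / rc"
      using v i Tc by (simp add: scalar_prod_def atLeast0LessThan add_divide_distrib)
    finally show ?thesis .
  qed
  have spec: "cmod mu < 1" if mu: "eigenvalue B mu" for mu
  proof -
    obtain v where ev: "eigenvector B v mu" using mu unfolding eigenvalue_def by auto
    hence v: "v \<in> carrier_vec n" "v \<noteq> 0\<^sub>v n" and Bmu: "B *\<^sub>v v = mu \<cdot>\<^sub>v v"
      unfolding eigenvector_def using B by auto
    define l where "l = (rc * mu - 1) / hc"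
    have "Tc *\<^sub>v v = l \<cdot>\<^sub>v v"
    proof (rule eq_vecI)
      fix i assume "i < dim_vec (l \<cdot>\<^sub>v v)"
      hence i: "i < n" using v by auto
      have "(B *\<^sub>v v) $ i = mu * v $ i" using Bmu i v by simp
      hence "(v $ i + hc * (Tc *\<^sub>v v) $ i) / rc = mu * v $ i" using Bv[OF v(1) i] by simp
      hence "(Tc *\<^sub>v v) $ i = (rc * mu - 1) / hc * v $ i" using hc0 rc0
        by (simp add: field_simps)
      thus "(Tc *\<^sub>v v) $ i = (l \<cdot>\<^sub>v v) $ i" unfolding l_def using i v by simp
    qed (use v Tc in auto)
    hence "eigenvalue Tc l" unfolding eigenvalue_def eigenvector_def using v Tc by auto
    hence "l \<in> spectrum Tc" unfolding spectrum_def by auto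
    from hr[OF this] have "cmod (rc * mu) < r" unfolding l_def hc_def[symmetric] using hc0
      by (simp add: field_simps)
    thus ?thesis using r0 unfolding rc_def by (simp add: norm_mult)
  qed
  have "spectral_radius B < 1"
  proof -
    have fin: "finite (spectrum B)" by (rule card_finite_spectrum(1)[OF B])
    have ne: "spectrum B \<noteq> {}" by (rule spectrum_non_empty[OF B n])
    show ?thesis unfolding spectral_radius_def using fin ne spec
      by (subst Max_less_iff) (auto simp: spectrum_def)
  qed
  then obtain C where C: "\<And>k. norm_bound (B ^\<^sub>m k) C"
    using spectral_radius_jnf_norm_bound_less_1_upper_triangular[OF B] by blast
  define q where "q = rc / hc"
  have Tc_ent: "Tc $$ (i,m) = q * B $$ (i,m) - (if i = m then 1 else 0) / hc" if "i < n" "m < n" for i m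
    unfolding q_def B_def using that hc0 rc0 by (simp add: field_simps)
  define Y where "Y s = exp (- s / hc) \<cdot>\<^sub>m mexp B (q * s)" for s
  have Y: "Y s \<in> carrier_mat n n" for s unfolding Y_def using B by simp
  have dY: "((\<lambda>s. Y s $$ (i,j)) has_field_derivative (Tc * Y s) $$ (i,j)) (at s)"
    if ij: "i < n" "j < n" for s i j
  proof -
    have eqY: "(\<lambda>s. Y s $$ (i,j)) = (\<lambda>s. exp (- s / hc) * mexp B (q * s) $$ (i,j))"
      unfolding Y_def using ij B by auto
    have d1: "((\<lambda>s. exp (- s / hc)) has_field_derivative exp (- s / hc) * (- 1 / hc)) (at s)"
      using hc0 by (auto intro!: derivative_eq_intros)
    have d2: "((\<lambda>s. mexp B (q * s) $$ (i,j)) has_field_derivative (B * mexp B (q * s)) $$ (i,j) * q) (at s)"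
      by (rule DERIV_chain2[OF mexp_deriv_left[OF B ij]]) (auto intro!: derivative_eq_intros)
    have d: "((\<lambda>s. Y s $$ (i,j)) has_field_derivative
       exp (- s / hc) * (- 1 / hc) * mexp B (q * s) $$ (i,j) + (B * mexp B (q * s)) $$ (i,j) * q * exp (- s / hc)) (at s)"
      unfolding eqY by (rule DERIV_mult[OF d1 d2])
    have "(Tc * Y s) $$ (i,j) = (\<Sum>m<n. Tc $$ (i,m) * (exp (- s / hc) * mexp B (q * s) $$ (m,j)))"
      using mult_index[OF Tc Y ij] ij B unfolding Y_def by simp
    also have "\<dots> = (\<Sum>m<n. q * exp (- s / hc) * (B $$ (i,m) * mexp B (q * s) $$ (m,j))
        - (if i = m then exp (- s / hc) * mexp B (q * s) $$ (m,j) / hc else 0))"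
      using ij by (intro sum.cong refl) (auto simp: Tc_ent field_simps)
    also have "\<dots> = q * exp (- s / hc) * (B * mexp B (q * s)) $$ (i,j) - exp (- s / hc) * mexp B (q * s) $$ (i,j) / hc"
      unfolding sum_subtractf sum_distrib_left[symmetric] mult_index[OF B mexp_carrier[OF B] ij]
      using ij by simp
    finally have eqT: "(Tc * Y s) $$ (i,j) = q * exp (- s / hc) * (B * mexp B (q * s)) $$ (i,j) - exp (- s / hc) * mexp B (q * s) $$ (i,j) / hc" .
    have alg: "exp (- s / hc) * (- 1 / hc) * mexp B (q * s) $$ (i,j) + (B * mexp B (q * s)) $$ (i,j) * q * exp (- s / hc)
      = q * exp (- s / hc) * (B * mexp B (q * s)) $$ (i,j) - exp (- s / hc) * mexp B (q * s) $$ (i,j) / hc"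
      using hc0 by (simp add: field_simps)
    show ?thesis using d unfolding eqT alg .
  qed
  have Y0: "Y 0 = 1\<^sub>m n" unfolding Y_def using B by (simp add: mexp_zero, intro eq_matI, auto)
  have Yeq: "Y s = mexp Tc s" for s by (rule ode_unique[OF Tc Y dY Y0])
  have bound: "norm (mexp T x $$ (i,j)) \<le> C * exp (- ((1 - r) / h) * x)" if x: "x \<ge> 0" for x
  proof -
    have "norm (mexp T x $$ (i,j)) = norm (complex_of_real (mexp T x $$ (i,j)))" by simp
    also have "\<dots> = norm (Y (complex_of_real x) $$ (i,j))"
      unfolding mexp_of_real_index[OF T i j] Yeq Tc_def ..
    also have "\<dots> = exp (- x / h) * norm (mexp B (complex_of_real (r * x / h)) $$ (i,j))"
    proof -
      have "Y (complex_of_real x) $$ (i,j) = complex_of_real (exp (- x / h)) * mexp B (complex_of_real (r * x / h)) $$ (i,j)"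
        unfolding Y_def q_def hc_def rc_def using i j B by (simp add: exp_of_real[symmetric])
      thus ?thesis by (simp add: norm_mult)
    qed
    also have "\<dots> \<le> exp (- x / h) * (C * exp (r * x / h))"
      using x h r0 by (intro mult_left_mono mexp_growth_bound[OF B i j C]) auto
    also have "\<dots> = C * exp (- x / h + r * x / h)" unfolding exp_add by (simp add: ac_simps)
    also have "\<dots> = C * exp (- ((1 - r) / h) * x)"
      using h by (intro arg_cong[where f="\<lambda>u. C * exp u"]) (simp add: field_simps)
    finally show ?thesis .
  qed
  show ?thesis
  proof (rule Lim_null_comparison)
    show "\<forall>\<^sub>F x in at_top. norm (mexp T x $$ (i,j)) \<le> C * exp (- ((1 - r) / h) * x)"
      using bound by (auto simp: eventually_at_top_linorder)
    show "((\<lambda>x. C * exp (- ((1 - r) / h) * x)) \<longlongrightarrow> 0) at_top"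
      using h r1 by (intro exp_decay_tendsto) auto
  qed
qed




lemma pow_smult_mat:
  fixes A :: "real mat"
  assumes A: "A \<in> carrier_mat n n"
  shows "(a \<cdot>\<^sub>m A) ^\<^sub>m k = a ^ k \<cdot>\<^sub>m (A ^\<^sub>m k)"
proof (induct k)
  case 0 show ?case using A by (intro eq_matI) auto
next
  case (Suc k)
  have "(a \<cdot>\<^sub>m A) ^\<^sub>m Suc k = (a ^ k \<cdot>\<^sub>m A ^\<^sub>m k) * (a \<cdot>\<^sub>m A)" using Suc by simp
  also have "\<dots> = a ^ k \<cdot>\<^sub>m (A ^\<^sub>m k * (a \<cdot>\<^sub>m A))"
    using A by (intro mult_smult_assoc_mat[of _ n n _ n]) auto
  also have "\<dots> = a ^ k \<cdot>\<^sub>m (a \<cdot>\<^sub>m (A ^\<^sub>m k * A))"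
    using A by (subst mult_smult_distrib[of _ n n _ n]) auto
  also have "\<dots> = a ^ Suc k \<cdot>\<^sub>m (A ^\<^sub>m Suc k)" using A by (intro eq_matI) auto
  finally show ?case .
qed

lemma mat_exp_mexp:
  assumes T: "T \<in> carrier_mat n n"
  shows "mat_exp (x \<cdot>\<^sub>m T) = mexp T x"
proof (rule eq_matI)
  fix i j assume "i < dim_row (mexp T x)" "j < dim_col (mexp T x)"
  hence ij: "i < n" "j < n" using T by auto
  have "mat_exp (x \<cdot>\<^sub>m T) $$ (i,j) = (\<Sum>k. ((1 / fact k) \<cdot>\<^sub>m ((x \<cdot>\<^sub>m T) ^\<^sub>m k)) $$ (i,j))"
    unfolding mat_exp_def using T ij by simp
  also have "\<dots> = (\<Sum>k. ecoef T i j k * x ^ k)"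
  proof (rule suminf_cong)
    fix k
    show "((1 / fact k) \<cdot>\<^sub>m ((x \<cdot>\<^sub>m T) ^\<^sub>m k)) $$ (i,j) = ecoef T i j k * x ^ k"
      unfolding pow_smult_mat[OF T] ecoef_def using T ij by simp
  qed
  also have "\<dots> = mexp T x $$ (i,j)" by (rule mexp_index[OF T ij, symmetric])
  finally show "mat_exp (x \<cdot>\<^sub>m T) $$ (i,j) = mexp T x $$ (i,j)" .
qed (use T in \<open>auto simp: mat_exp_def\<close>)

lemma vec_mat_scalar:
  assumes A: "A \<in> carrier_mat n n" and v: "v \<in> carrier_vec n" and w: "w \<in> carrier_vec n"
  shows "vec_mat v A \<bullet> w = v \<bullet> (A *\<^sub>v w)"
  unfolding vec_mat_def mult_mat_vec_def using assoc_scalar_prod[OF v A w] A by simp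

lemma scalar_mat_vec_sum:
  assumes A: "A \<in> carrier_mat n n" and v: "v \<in> carrier_vec n" and w: "w \<in> carrier_vec n"
  shows "v \<bullet> (A *\<^sub>v w) = (\<Sum>i<n. \<Sum>j<n. v $ i * (A $$ (i,j) * w $ j))"
  using A v w by (simp add: scalar_prod_def atLeast0LessThan sum_distrib_left)

locale me_setup =
  fixes n :: nat and \<alpha> t :: "real vec" and T :: "real mat"
  assumes T: "T \<in> carrier_mat n n" and \<alpha>: "\<alpha> \<in> carrier_vec n" and t: "t \<in> carrier_vec n"
    and eig: "\<And>c. eigenvalue (map_mat complex_of_real T) c \<Longrightarrow> Re c < 0"
    and nonneg: "\<And>x. x \<ge> 0 \<Longrightarrow> ME_fun \<alpha> T t x \<ge> 0"
begin

definition "l = ME_l T t"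
definition "g x = \<alpha> \<bullet> (mexp T x *\<^sub>v t)"
definition "phi x = \<alpha> \<bullet> (mexp T x *\<^sub>v l)"

lemma ME_fun_eq: "ME_fun \<alpha> T t x = g x"
  unfolding ME_fun_def g_def mat_exp_mexp[OF T] ..

lemma g_nonneg: "x \<ge> 0 \<Longrightarrow> g x \<ge> 0"
  using nonneg ME_fun_eq by metis

lemma inv_ex: "\<exists>B. mat_inverse (- T) = Some B \<and> (- T) * B = 1\<^sub>m n \<and> B \<in> carrier_mat n n"
proof -
  have mT: "- T \<in> carrier_mat n n" using T by simp
  have "det (- T) \<noteq> 0"
  proof
    assume "det (- T) = 0"
    then obtain v where v: "v \<in> carrier_vec n" "v \<noteq> 0\<^sub>v n" "(- T) *\<^sub>v v = 0\<^sub>v n"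
      using det_0_iff_vec_prod_zero[OF mT] by auto
    have "T *\<^sub>v v = 0 \<cdot>\<^sub>v v"
    proof (rule eq_vecI)
      fix i assume "i < dim_vec (0 \<cdot>\<^sub>v v)"
      hence i: "i < n" using v by auto
      have X: "- (T *\<^sub>v v) = 0\<^sub>v n" using v(3) T v by simp
      have "(- (T *\<^sub>v v)) $ i = (0\<^sub>v n) $ i" using arg_cong[OF X, of "\<lambda>u. u $ i"] by simp
      hence "(T *\<^sub>v v) $ i = 0" using i T v by simp
      thus "(T *\<^sub>v v) $ i = (0 \<cdot>\<^sub>v v) $ i" using i v by simp
    qed (use T v in auto)
    hence "eigenvector T v 0" unfolding eigenvector_def using T v by auto
    hence "eigenvalue T 0" unfolding eigenvalue_def by auto
    from of_real_hom.eigenvalue_hom[OF T this] have "eigenvalue (map_mat complex_of_real T) 0" by simp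
    from eig[OF this] show False by simp
  qed
  hence U: "- T \<in> Units (ring_mat TYPE(real) n undefined)" by (rule det_non_zero_imp_unit[OF mT])
  obtain B where B: "mat_inverse (- T) = Some B"
    using mat_inverse(1)[OF mT, of undefined] U by (cases "mat_inverse (- T)") auto
  from mat_inverse(2)[OF mT B] B show ?thesis by auto
qed

lemma l_carrier: "l \<in> carrier_vec n"
  using inv_ex t unfolding l_def ME_l_def by auto

lemma Tl: "T *\<^sub>v l = - t"
proof -
  obtain B where B: "mat_inverse (- T) = Some B" "(- T) * B = 1\<^sub>m n" "B \<in> carrier_mat n n"
    using inv_ex by auto
  have "(- T) *\<^sub>v l = (- T) *\<^sub>v (B *\<^sub>v t)" unfolding l_def ME_l_def B(1) by simp
  also have "\<dots> = ((- T) * B) *\<^sub>v t" by (rule assoc_mult_mat_vec[symmetric]) (use T B t in auto)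
  also have "\<dots> = 1\<^sub>m n *\<^sub>v t" unfolding B(2) ..
  also have "\<dots> = t" using t by simp
  finally have mt: "(- T) *\<^sub>v l = t" .
  show ?thesis
  proof (rule eq_vecI)
    fix i assume "i < dim_vec (- t)"
    hence i: "i < n" using t by auto
    have "((- T) *\<^sub>v l) $ i = - (T *\<^sub>v l) $ i" using T l_carrier i
      by (simp add: scalar_prod_def sum_negf[symmetric])
    thus "(T *\<^sub>v l) $ i = (- t) $ i" using mt i t by simp
  qed (use T t in auto)
qed

lemma vec_deriv:
  assumes w: "w \<in> carrier_vec n"
  shows "((\<lambda>x. \<alpha> \<bullet> (mexp T x *\<^sub>v w)) has_field_derivative \<alpha> \<bullet> (mexp T x *\<^sub>v (T *\<^sub>v w))) (at x)"
proof -
  have eq: "(\<lambda>x. \<alpha> \<bullet> (mexp T x *\<^sub>v w)) = (\<lambda>x. \<Sum>i<n. \<Sum>j<n. \<alpha> $ i * (mexp T x $$ (i,j) * w $ j))"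
    using scalar_mat_vec_sum[OF mexp_carrier[OF T] \<alpha> w] by auto
  have d: "((\<lambda>x. \<Sum>i<n. \<Sum>j<n. \<alpha> $ i * (mexp T x $$ (i,j) * w $ j)) has_field_derivative
      (\<Sum>i<n. \<Sum>j<n. \<alpha> $ i * ((mexp T x * T) $$ (i,j) * w $ j))) (at x)"
    by (intro DERIV_sum DERIV_cmult DERIV_cmult_right mexp_deriv[OF T]) auto
  have "\<alpha> \<bullet> (mexp T x *\<^sub>v (T *\<^sub>v w)) = \<alpha> \<bullet> ((mexp T x * T) *\<^sub>v w)"
    by (simp add: assoc_mult_mat_vec[OF mexp_carrier[OF T] T w])
  also have "\<dots> = (\<Sum>i<n. \<Sum>j<n. \<alpha> $ i * ((mexp T x * T) $$ (i,j) * w $ j))"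
    by (rule scalar_mat_vec_sum[OF mult_carrier_mat[OF mexp_carrier[OF T] T] \<alpha> w])
  finally show ?thesis using d eq by simp
qed

lemma phi_deriv: "(phi has_field_derivative - g x) (at x)"
proof -
  have "(phi has_field_derivative \<alpha> \<bullet> (mexp T x *\<^sub>v (T *\<^sub>v l))) (at x)"
    using vec_deriv[OF l_carrier] unfolding phi_def by simp
  moreover have "\<alpha> \<bullet> (mexp T x *\<^sub>v (T *\<^sub>v l)) = - g x"
    unfolding Tl g_def using scalar_mat_vec_sum[OF mexp_carrier[OF T] \<alpha> t, of x]
      scalar_mat_vec_sum[OF mexp_carrier[OF T] \<alpha>, of "- t" x] t
    by (simp add: sum_negf[symmetric])
  ultimately show ?thesis by simp
qed

lemma g_cont: "isCont g x"
proof -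
  have "(g has_field_derivative \<alpha> \<bullet> (mexp T x *\<^sub>v (T *\<^sub>v t))) (at x)"
    using vec_deriv[OF t] unfolding g_def[abs_def] by simp
  thus ?thesis by (rule DERIV_isCont)
qed

lemma phi_lim: "(phi \<longlongrightarrow> 0) at_top"
proof -
  have eq: "phi = (\<lambda>x. \<Sum>i<n. \<Sum>j<n. \<alpha> $ i * (mexp T x $$ (i,j) * l $ j))"
    unfolding phi_def using scalar_mat_vec_sum[OF mexp_carrier[OF T] \<alpha> l_carrier] by auto
  have "((\<lambda>x. \<Sum>i<n. \<Sum>j<n. \<alpha> $ i * (mexp T x $$ (i,j) * l $ j)) \<longlongrightarrow> (\<Sum>i<n. \<Sum>j<n. \<alpha> $ i * (0 * l $ j))) at_top"
    by (intro tendsto_sum tendsto_mult tendsto_const mexp_decay[OF T eig]) auto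
  thus ?thesis unfolding eq by simp
qed

lemma surv:
  assumes aw: "a + w \<ge> 0"
  shows "set_integrable lborel {a<..} (\<lambda>x. g (x + w))"
    "(LINT x:{a<..}|lborel. g (x + w)) = phi (a + w)"
proof -
  define F where "F x = - phi (x + w)" for x
  have F: "(F has_real_derivative g (x + w)) (at x)" for x
  proof -
    have "((\<lambda>x. phi (x + w)) has_real_derivative - g (x + w) * 1) (at x)"
      by (rule DERIV_chain2[OF phi_deriv]) (auto intro!: derivative_eq_intros)
    thus ?thesis unfolding F_def using DERIV_minus by fastforce
  qed
  have c: "isCont (\<lambda>x. g (x + w)) x" for x
    by (rule continuous_at_compose[OF _ g_cont, unfolded o_def]) (auto intro!: continuous_intros)
  have A: "((F \<circ> real_of_ereal) \<longlongrightarrow> F a) (at_right (ereal a))"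
    unfolding ereal_tendsto_simps
    by (rule tendsto_mono[OF at_le[OF subset_UNIV]]) (use DERIV_isCont[OF F] in \<open>simp add: isCont_def\<close>)
  have B: "((F \<circ> real_of_ereal) \<longlongrightarrow> 0) (at_left \<infinity>)"
  proof -
    have "((\<lambda>x. x + w) \<longlongrightarrow> \<infinity>) at_top \<or> True" by simp
    have "filterlim (\<lambda>x. x + w) at_top at_top" by real_asymp
    hence "((\<lambda>x. phi (x + w)) \<longlongrightarrow> 0) at_top" by (rule filterlim_compose[OF phi_lim])
    hence "(F \<longlongrightarrow> - 0) at_top" unfolding F_def by (rule tendsto_minus)
    thus ?thesis unfolding ereal_tendsto_simps by simp
  qed
  have ei: "einterval (ereal a) \<infinity> = {a<..}" unfolding einterval_def by auto
  have main: "set_integrable lborel (einterval (ereal a) \<infinity>) (\<lambda>x. g (x + w))"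
    "(LBINT x=ereal a..\<infinity>. g (x + w)) = 0 - F a"
    by (rule interval_integral_FTC_nonneg[OF _ F c _ A B]; use aw in \<open>auto intro!: g_nonneg\<close>)+
  show "set_integrable lborel {a<..} (\<lambda>x. g (x + w))" using main(1) ei by simp
  show "(LINT x:{a<..}|lborel. g (x + w)) = phi (a + w)"
    using main(2) ei unfolding interval_lebesgue_integral_def F_def by simp
qed

lemma phi_nonneg: assumes z: "z \<ge> 0" shows "phi z \<ge> 0"
proof -
  have "phi z = (LINT x:{0<..}|lborel. g (x + z))" using surv(2)[of 0 z] z by simp
  also have "\<dots> \<ge> 0" unfolding set_lebesgue_integral_def
    by (rule Bochner_Integration.integral_nonneg) (use z in \<open>auto simp: indicator_def intro!: g_nonneg\<close>)
  finally show ?thesis .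
qed

lemma phi_zero_g:
  assumes z: "z \<ge> 0" and pz: "phi z = 0" and y: "y \<ge> z"
  shows "g y = 0"
proof -
  have pzero: "phi u = 0" if u: "u \<ge> z" for u
  proof -
    have "phi u \<le> phi z"
      by (rule DERIV_nonpos_imp_nonincreasing[OF u]) (use z phi_deriv g_nonneg in \<open>fastforce\<close>)
    moreover have "phi u \<ge> 0" using phi_nonneg u z by simp
    ultimately show ?thesis using pz by simp
  qed
  have "((\<lambda>h. (phi (y + h) - phi y) / h) \<longlongrightarrow> - g y) (at 0)"
    using phi_deriv[of y] unfolding DERIV_def .
  hence lim: "((\<lambda>h. (phi (y + h) - phi y) / h) \<longlongrightarrow> - g y) (at_right 0)"
    by (rule tendsto_mono[OF at_le[OF subset_UNIV]])
  have ev: "\<forall>\<^sub>F h in at_right 0. (phi (y + h) - phi y) / h = 0"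
    using pzero y by (auto simp: eventually_at_right_less intro!: eventually_mono[OF eventually_at_right_less])
  have "((\<lambda>h. (phi (y + h) - phi y) / h) \<longlongrightarrow> 0) (at_right (0::real))"
    by (rule tendsto_eventually[OF ev])
  from tendsto_unique[OF trivial_limit_at_right_real lim this] show ?thesis by simp
qed

lemma RL_fun:
  "ME_fun ((1 / c) \<cdot>\<^sub>v vec_mat \<alpha> (mat_exp (z \<cdot>\<^sub>m T))) T t x = g (z + x) / c"
proof -
  have "vec_mat \<alpha> (mat_exp (z \<cdot>\<^sub>m T)) \<bullet> (mat_exp (x \<cdot>\<^sub>m T) *\<^sub>v t) = \<alpha> \<bullet> (mexp T z *\<^sub>v (mexp T x *\<^sub>v t))"
    unfolding mat_exp_mexp[OF T]
    by (rule vec_mat_scalar[OF mexp_carrier[OF T] \<alpha> mult_mat_vec_carrier[OF mexp_carrier[OF T] t]])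
  also have "\<dots> = g (z + x)" unfolding g_def mexp_add[OF T]
    by (simp add: assoc_mult_mat_vec[OF mexp_carrier[OF T] mexp_carrier[OF T] t])
  finally have e: "vec_mat \<alpha> (mat_exp (z \<cdot>\<^sub>m T)) \<bullet> (mat_exp (x \<cdot>\<^sub>m T) *\<^sub>v t) = g (z + x)" .
  have d: "dim_vec (vec_mat \<alpha> (mat_exp (z \<cdot>\<^sub>m T))) = dim_vec (mat_exp (x \<cdot>\<^sub>m T) *\<^sub>v t)"
    unfolding mat_exp_mexp[OF T] vec_mat_def using T by simp
  show ?thesis unfolding ME_fun_def using e d by simp
qed

lemma RL_carrier: "(1 / c) \<cdot>\<^sub>v vec_mat \<alpha> (mat_exp (z \<cdot>\<^sub>m T)) \<in> carrier_vec n"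
  unfolding mat_exp_mexp[OF T] vec_mat_def using T by simp

lemma RL_density:
  assumes z: "z \<ge> 0" and c: "phi z > 0"
  shows "ME_density_triple n ((1 / phi z) \<cdot>\<^sub>v vec_mat \<alpha> (mat_exp (z \<cdot>\<^sub>m T))) T t"
proof -
  have "ME_triple n ((1 / phi z) \<cdot>\<^sub>v vec_mat \<alpha> (mat_exp (z \<cdot>\<^sub>m T))) T t"
    unfolding ME_triple_def using RL_carrier T t eig by auto
  moreover have "\<forall>x\<ge>0. ME_fun ((1 / phi z) \<cdot>\<^sub>v vec_mat \<alpha> (mat_exp (z \<cdot>\<^sub>m T))) T t x \<ge> 0"
    unfolding RL_fun using z c by (auto intro!: divide_nonneg_pos g_nonneg)
  moreover have "(ME_fun ((1 / phi z) \<cdot>\<^sub>v vec_mat \<alpha> (mat_exp (z \<cdot>\<^sub>m T))) T t has_integral 1) {0..}"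
  proof -
    have si: "set_integrable lborel {0<..} (\<lambda>x. g (x + z))" and iv: "(LINT x:{0<..}|lborel. g (x + z)) = phi z"
      using surv[of 0 z] z by auto
    have "((\<lambda>x. g (x + z)) has_integral phi z) {0<..}"
      using set_borel_integral_eq_integral[OF si] iv by (simp add: has_integral_integral)
    hence "((\<lambda>x. g (x + z) * (1 / phi z)) has_integral phi z * (1 / phi z)) {0<..}"
      by (rule has_integral_mult_left)
    hence "((\<lambda>x. g (x + z) * (1 / phi z)) has_integral 1) {0<..}" using c by simp
    hence "((\<lambda>x. g (x + z) * (1 / phi z)) has_integral 1) {0..}"
      by (rule has_integral_spike_set_eq[THEN iffD1, rotated -1])
        (auto intro: negligible_subset[OF negligible_sing[of 0]])
    moreover have "ME_fun ((1 / phi z) \<cdot>\<^sub>v vec_mat \<alpha> (mat_exp (z \<cdot>\<^sub>m T))) T t = (\<lambda>x. g (x + z) * (1 / phi z))"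
      unfolding RL_fun by (auto simp: add.commute)
    ultimately show ?thesis by simp
  qed
  ultimately show ?thesis unfolding ME_density_triple_def by blast
qed

end


context me_setup
begin

lemma phi_eq: "\<alpha> \<bullet> (mat_exp (x \<cdot>\<^sub>m T) *\<^sub>v ME_l T t) = phi x"
  unfolding phi_def l_def mat_exp_mexp[OF T] ..

lemma out_nonneg: "z \<ge> 0 \<Longrightarrow> \<alpha> \<bullet> (mat_exp (z \<cdot>\<^sub>m T) *\<^sub>v ME_l T t) \<ge> 0"
  unfolding phi_eq by (rule phi_nonneg)

lemma out_zero: "z \<ge> 0 \<Longrightarrow> \<alpha> \<bullet> (mat_exp (z \<cdot>\<^sub>m T) *\<^sub>v ME_l T t) = 0 \<Longrightarrow> y \<ge> z \<Longrightarrow> ME_fun \<alpha> T t y = 0"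
  unfolding phi_eq ME_fun_eq by (rule phi_zero_g)

lemma out_RL: "ME_fun ((1 / c) \<cdot>\<^sub>v vec_mat \<alpha> (mat_exp (z \<cdot>\<^sub>m T))) T t y = ME_fun \<alpha> T t (z + y) / c"
  unfolding RL_fun ME_fun_eq ..

lemma out_dens: "z \<ge> 0 \<Longrightarrow> \<alpha> \<bullet> (mat_exp (z \<cdot>\<^sub>m T) *\<^sub>v ME_l T t) > 0 \<Longrightarrow>
   ME_density_triple n ((1 / (\<alpha> \<bullet> (mat_exp (z \<cdot>\<^sub>m T) *\<^sub>v ME_l T t))) \<cdot>\<^sub>v vec_mat \<alpha> (mat_exp (z \<cdot>\<^sub>m T))) T t"
  unfolding phi_eq by (rule RL_density)

lemma out_int:
  assumes z: "z \<ge> 0"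
  shows "integrable lborel (\<lambda>y. indicator {z..} y * ME_fun \<alpha> T t y)"
    "integral\<^sup>L lborel (\<lambda>y. indicator {z..} y * ME_fun \<alpha> T t y) = \<alpha> \<bullet> (mat_exp (z \<cdot>\<^sub>m T) *\<^sub>v ME_l T t)"
proof -
  have si: "set_integrable lborel {z<..} g" and iv: "(LINT x:{z<..}|lborel. g x) = phi z"
    using surv[of z 0] z by auto
  have pt: "(\<lambda>x. indicator {z} x *\<^sub>R g x) = (\<lambda>x. g z * indicator {z} x)"
    by (auto simp: indicator_def)
  have s1: "set_integrable lborel {z} g"
    unfolding set_integrable_def pt
    by (intro integrable_mult_right integrable_real_indicator) auto
  have i1: "(LINT x:{z}|lborel. g x) = 0"
    unfolding set_lebesgue_integral_def pt by simp
  have U: "{z..} = {z<..} \<union> {z}" by auto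
  have s: "set_integrable lborel {z..} g" unfolding U by (rule set_integrable_Un[OF si s1]) auto
  have v: "(LINT x:{z..}|lborel. g x) = phi z" unfolding U
    by (subst set_integral_Un[OF _ si s1]) (use iv i1 in auto)
  have e: "(\<lambda>y. indicator {z..} y * ME_fun \<alpha> T t y) = (\<lambda>y. indicator {z..} y *\<^sub>R g y)"
    unfolding ME_fun_eq by simp
  show "integrable lborel (\<lambda>y. indicator {z..} y * ME_fun \<alpha> T t y)"
    unfolding e using s unfolding set_integrable_def .
  show "integral\<^sup>L lborel (\<lambda>y. indicator {z..} y * ME_fun \<alpha> T t y) = \<alpha> \<bullet> (mat_exp (z \<cdot>\<^sub>m T) *\<^sub>v ME_l T t)"
    unfolding e phi_eq using v unfolding set_lebesgue_integral_def .
qed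

end


lemma indicator_PiE_prod:
  assumes x: "x \<in> extensional I" and I: "finite I"
  shows "indicator (PiE I A) x = (\<Prod>k\<in>I. indicator (A k) (x k) :: real)"
proof (cases "\<forall>k\<in>I. x k \<in> A k")
  case True
  hence "x \<in> PiE I A" using x by (auto simp: PiE_iff)
  thus ?thesis using True by simp
next
  case False
  then obtain k where k: "k \<in> I" "x k \<notin> A k" by auto
  hence "x \<notin> PiE I A" by (auto simp: PiE_iff)
  moreover have "(\<Prod>k\<in>I. indicator (A k) (x k) :: real) = 0"
    using k I by (intro prod_zero bexI[of _ k]) auto
  ultimately show ?thesis by simp
qed

lemma enc_decode:
  fixes k j L :: nat assumes j: "j \<in> {1..L}"
  shows "(k * L + j - 1) div L = k" "(k * L + j - 1) mod L + 1 = j"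
proof -
  have L: "L > 0" using j by auto
  have d: "(k * L + j - 1) div L = k"
    by (intro div_nat_eqI) (use j in \<open>auto simp: mult.commute\<close>)
  have "k * L + j - 1 = (k * L + j - 1) div L * L + (k * L + j - 1) mod L"
    by (rule div_mult_mod_eq[symmetric])
  hence "k * L + j - 1 = k * L + (k * L + j - 1) mod L" unfolding d .
  thus "(k * L + j - 1) div L = k" "(k * L + j - 1) mod L + 1 = j" using d j by auto
qed

theorem theorem2:
  fixes L M :: nat
    and n :: "nat \<Rightarrow> nat"
    and \<alpha> :: "nat \<Rightarrow> real vec" and T :: "nat \<Rightarrow> real mat" and t :: "nat \<Rightarrow> real vec"
    and p :: "(nat \<Rightarrow> nat) \<Rightarrow> real"
    and f :: "(nat \<Rightarrow> real) \<Rightarrow> real"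
    and z :: "nat \<Rightarrow> real"
  assumes L: "1 \<le> L" and M: "1 \<le> M"
    and dens: "\<forall>j\<in>{1..L}. ME_density_triple (n j) (\<alpha> j) (T j) (t j)"
    and psum: "(\<Sum>i\<in>idx_set L M. p i) = 1"
    and f_def: "\<forall>x. f x = (\<Sum>i\<in>idx_set L M. p i * (\<Prod>k<M. ME_fun (\<alpha> (i k)) (T (i k)) (t (i k)) (x k)))"
    and f_nonneg: "\<forall>x. nonneg_pt M x \<longrightarrow> 0 \<le> f x"
    and z_nonneg: "nonneg_pt M z"
    and Fbar_pos: "set_lebesgue_integral (PiM {..<M} (\<lambda>_. lborel)) (PiE {..<M} (\<lambda>k. {z k..})) f > 0"
  shows
    "MMEam M (\<lambda>x. f (\<lambda>k. x k + z k) /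
        set_lebesgue_integral (PiM {..<M} (\<lambda>_. lborel)) (PiE {..<M} (\<lambda>k. {z k..})) f)
     \<and> (\<forall>x. nonneg_pt M x \<longrightarrow>
        f (\<lambda>k. x k + z k) /
        set_lebesgue_integral (PiM {..<M} (\<lambda>_. lborel)) (PiE {..<M} (\<lambda>k. {z k..})) f
        = (\<Sum>i\<in>idx_set L M.
             (p i * (\<Prod>k<M. scalar_prod (\<alpha> (i k)) (mat_exp (z k \<cdot>\<^sub>m T (i k)) *\<^sub>v ME_l (T (i k)) (t (i k))))
              / (\<Sum>h\<in>idx_set L M. p h * (\<Prod>k<M. scalar_prod (\<alpha> (h k)) (mat_exp (z k \<cdot>\<^sub>m T (h k)) *\<^sub>v ME_l (T (h k)) (t (h k))))))
           * (\<Prod>k<M. ME_fun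
                ((1 / scalar_prod (\<alpha> (i k)) (mat_exp (z k \<cdot>\<^sub>m T (i k)) *\<^sub>v ME_l (T (i k)) (t (i k))))
                   \<cdot>\<^sub>v vec_mat (\<alpha> (i k)) (mat_exp (z k \<cdot>\<^sub>m T (i k))))
                (T (i k)) (t (i k)) (x k))))"
proof -
  have stp: "me_setup (n j) (\<alpha> j) (t j) (T j)" if "j \<in> {1..L}" for j
    using dens that unfolding ME_density_triple_def ME_triple_def me_setup_def by auto
  have zk: "z k \<ge> 0" if "k < M" for k using z_nonneg that unfolding nonneg_pt_def by auto
  define gf where "gf j y = ME_fun (\<alpha> j) (T j) (t j) y" for j y
  define cc where "cc k j = scalar_prod (\<alpha> j) (mat_exp (z k \<cdot>\<^sub>m T j) *\<^sub>v ME_l (T j) (t j))" for k j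
  define aRL where "aRL k j = (1 / cc k j) \<cdot>\<^sub>v vec_mat (\<alpha> j) (mat_exp (z k \<cdot>\<^sub>m T j))" for k j
  define D where "D = (\<Sum>h\<in>idx_set L M. p h * (\<Prod>k<M. cc k (h k)))"
  define Fb where "Fb = set_lebesgue_integral (PiM {..<M} (\<lambda>_. lborel)) (PiE {..<M} (\<lambda>k. {z k..})) f"
  have fin: "finite (idx_set L M)" unfolding idx_set_def by (rule finite_PiE) auto
  have iL: "i k \<in> {1..L}" if "i \<in> idx_set L M" "k < M" for i k
    using PiE_mem[OF that(1)[unfolded idx_set_def]] that(2) by simp
  have cc_nonneg: "cc k j \<ge> 0" if "k < M" "j \<in> {1..L}" for k j
    unfolding cc_def using me_setup.out_nonneg[OF stp[OF that(2)] zk[OF that(1)]] .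
  have cc_zero: "gf j y = 0" if "k < M" "j \<in> {1..L}" "cc k j = 0" "y \<ge> z k" for k j y
    unfolding gf_def using me_setup.out_zero[OF stp[OF that(2)] zk[OF that(1)]] that(3,4)
    unfolding cc_def by blast
  have cc_int: "integrable lborel (\<lambda>y. indicator {z k..} y * gf j y)"
    "integral\<^sup>L lborel (\<lambda>y. indicator {z k..} y * gf j y) = cc k j" if "k < M" "j \<in> {1..L}" for k j
    unfolding gf_def cc_def using me_setup.out_int[OF stp[OF that(2)] zk[OF that(1)]] by auto
  have RLf: "ME_fun (aRL k j) (T j) (t j) y = gf j (z k + y) / cc k j" if "j \<in> {1..L}" for k j y
    unfolding aRL_def gf_def using me_setup.out_RL[OF stp[OF that]] .
  have RLd: "ME_density_triple (n j) (aRL k j) (T j) (t j)" if "k < M" "j \<in> {1..L}" "cc k j > 0" for k j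
    unfolding aRL_def using me_setup.out_dens[OF stp[OF that(2)] zk[OF that(1)]] that(3)
    unfolding cc_def by blast
  have FbD: "Fb = D"
  proof -
    interpret psf: product_sigma_finite "\<lambda>_::nat. lborel :: real measure"
      unfolding product_sigma_finite_def by (auto intro: sigma_finite_lborel)
    have "Fb = (LINT x|PiM {..<M} (\<lambda>_. lborel). (\<Sum>i\<in>idx_set L M. p i * (\<Prod>k<M. indicator {z k..} (x k) * gf (i k) (x k))))"
      unfolding Fb_def set_lebesgue_integral_def
    proof (rule Bochner_Integration.integral_cong[OF refl])
      fix x assume "x \<in> space (PiM {..<M} (\<lambda>_. lborel :: real measure))"
      hence x: "x \<in> extensional {..<M}" by (auto simp: space_PiM PiE_iff)
      have "indicator (PiE {..<M} (\<lambda>k. {z k..})) x *\<^sub>R f x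
          = (\<Prod>k<M. indicator {z k..} (x k)) * (\<Sum>i\<in>idx_set L M. p i * (\<Prod>k<M. gf (i k) (x k)))"
        unfolding indicator_PiE_prod[OF x finite_lessThan] using f_def unfolding gf_def by simp
      also have "\<dots> = (\<Sum>i\<in>idx_set L M. p i * (\<Prod>k<M. indicator {z k..} (x k) * gf (i k) (x k)))"
        by (simp add: sum_distrib_left prod.distrib ac_simps)
      finally show "indicator (PiE {..<M} (\<lambda>k. {z k..})) x *\<^sub>R f x
          = (\<Sum>i\<in>idx_set L M. p i * (\<Prod>k<M. indicator {z k..} (x k) * gf (i k) (x k)))" .
    qed
    also have "\<dots> = (\<Sum>i\<in>idx_set L M. LINT x|PiM {..<M} (\<lambda>_. lborel). p i * (\<Prod>k<M. indicator {z k..} (x k) * gf (i k) (x k)))"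
    proof (rule Bochner_Integration.integral_sum)
      fix i assume i: "i \<in> idx_set L M"
      show "integrable (PiM {..<M} (\<lambda>_. lborel)) (\<lambda>x. p i * (\<Prod>k<M. indicator {z k..} (x k) * gf (i k) (x k)))"
        by (rule integrable_mult_right, rule psf.product_integrable_prod) (auto intro: cc_int(1) iL[OF i])
    qed
    also have "\<dots> = (\<Sum>i\<in>idx_set L M. p i * (\<Prod>k<M. cc k (i k)))"
    proof (rule sum.cong[OF refl])
      fix i assume i: "i \<in> idx_set L M"
      have "(LINT x|PiM {..<M} (\<lambda>_. lborel). (\<Prod>k<M. indicator {z k..} (x k) * gf (i k) (x k)))
          = (\<Prod>k<M. integral\<^sup>L lborel (\<lambda>y. indicator {z k..} y * gf (i k) y))"
        by (rule psf.product_integral_prod) (auto intro!: cc_int(1) iL[OF i])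
      also have "\<dots> = (\<Prod>k<M. cc k (i k))"
        by (rule prod.cong[OF refl]) (auto intro!: cc_int(2) iL[OF i])
      finally show "(LINT x|PiM {..<M} (\<lambda>_. lborel). p i * (\<Prod>k<M. indicator {z k..} (x k) * gf (i k) (x k)))
          = p i * (\<Prod>k<M. cc k (i k))" by simp
    qed
    finally show ?thesis unfolding D_def .
  qed
  have D0: "D > 0" using Fbar_pos unfolding FbD[symmetric] Fb_def .
  define pR where "pR i = p i * (\<Prod>k<M. cc k (i k)) / D" for i
  have rep: "f (\<lambda>k. x k + z k) / Fb = (\<Sum>i\<in>idx_set L M. pR i * (\<Prod>k<M. ME_fun (aRL k (i k)) (T (i k)) (t (i k)) (x k)))"
    if x: "nonneg_pt M x" for x
  proof -
    have xk: "x k \<ge> 0" if "k < M" for k using x that unfolding nonneg_pt_def by auto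
    have "f (\<lambda>k. x k + z k) / Fb = (\<Sum>i\<in>idx_set L M. p i * (\<Prod>k<M. gf (i k) (x k + z k)) / D)"
      using f_def unfolding FbD gf_def by (simp add: sum_divide_distrib)
    also have "\<dots> = (\<Sum>i\<in>idx_set L M. pR i * (\<Prod>k<M. ME_fun (aRL k (i k)) (T (i k)) (t (i k)) (x k)))"
    proof (rule sum.cong[OF refl])
      fix i assume i: "i \<in> idx_set L M"
      have e: "(\<Prod>k<M. ME_fun (aRL k (i k)) (T (i k)) (t (i k)) (x k)) = (\<Prod>k<M. gf (i k) (x k + z k) / cc k (i k))"
        by (rule prod.cong[OF refl]) (auto simp: RLf[OF iL[OF i]] add.commute)
      show "p i * (\<Prod>k<M. gf (i k) (x k + z k)) / D = pR i * (\<Prod>k<M. ME_fun (aRL k (i k)) (T (i k)) (t (i k)) (x k))"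
      proof (cases "\<exists>k<M. cc k (i k) = 0")
        case True
        then obtain k0 where k0: "k0 < M" "cc k0 (i k0) = 0" by auto
        have "gf (i k0) (x k0 + z k0) = 0"
          by (rule cc_zero[OF k0(1) iL[OF i k0(1)] k0(2)]) (use xk[OF k0(1)] in simp)
        hence A: "(\<Prod>k<M. gf (i k) (x k + z k)) = 0" using k0 by (intro prod_zero) auto
        have B: "(\<Prod>k<M. cc k (i k)) = 0" using k0 by (intro prod_zero) auto
        show ?thesis unfolding pR_def A B by simp
      next
        case False
        hence nz: "(\<Prod>k<M. cc k (i k)) \<noteq> 0" by simp
        show ?thesis unfolding e pR_def prod_dividef using nz D0 by (simp add: field_simps)
      qed
    qed
    finally show ?thesis .
  qed
  define G where "G k j = (if cc k j > 0 then ME_fun (aRL k j) (T j) (t j) else gf j)" for k j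
  define enc where "enc k j = k * L + j" for k j :: nat
  define g' where "g' j' = G ((j' - 1) div L) ((j' - 1) mod L + 1)" for j'
  define Phi where "Phi i = restrict (\<lambda>k. enc k (i k)) {..<M}" for i :: "nat \<Rightarrow> nat"
  define p' where "p' i' = (if i' \<in> Phi ` idx_set L M then pR (the_inv_into (idx_set L M) Phi i') else 0)" for i'
  have g'enc: "g' (enc k j) = G k j" if "j \<in> {1..L}" for k j
    unfolding g'_def enc_def using enc_decode[OF that, of k] by simp
  have enc_range: "enc k j \<in> {1..L * M}" if "k < M" "j \<in> {1..L}" for k j
  proof -
    have "k * L + j \<le> k * L + L" using that by auto
    also have "\<dots> = Suc k * L" by simp
    also have "\<dots> \<le> M * L" using that by (intro mult_le_mono1) auto
    finally show ?thesis unfolding enc_def using that by (auto simp: mult.commute)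
  qed
  have Phi_mem: "Phi i \<in> idx_set (L * M) M" if "i \<in> idx_set L M" for i
    using enc_range iL[OF that] unfolding Phi_def idx_set_def by (auto simp: PiE_iff)
  have inj: "inj_on Phi (idx_set L M)"
  proof (rule inj_onI)
    fix i i' assume i: "i \<in> idx_set L M" and i': "i' \<in> idx_set L M" and eq: "Phi i = Phi i'"
    show "i = i'"
    proof (rule PiE_ext)
      show "i \<in> PiE {..<M} (\<lambda>_. {1..L})" "i' \<in> PiE {..<M} (\<lambda>_. {1..L})" using i i' unfolding idx_set_def by auto
      fix k assume k: "k \<in> {..<M}"
      have "Phi i k = Phi i' k" using eq by simp
      thus "i k = i' k" using k unfolding Phi_def enc_def by simp
    qed
  qed
  have finL: "finite (idx_set (L * M) M)" unfolding idx_set_def by (rule finite_PiE) auto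
  have sub: "Phi ` idx_set L M \<subseteq> idx_set (L * M) M" using Phi_mem by auto
  have sum_p': "(\<Sum>i'\<in>idx_set (L * M) M. h i') = (\<Sum>i\<in>idx_set L M. h (Phi i))"
    if h0: "\<And>i'. i' \<notin> Phi ` idx_set L M \<Longrightarrow> h i' = 0" for h :: "(nat \<Rightarrow> nat) \<Rightarrow> real"
  proof -
    have "(\<Sum>i'\<in>idx_set (L * M) M. h i') = (\<Sum>i'\<in>Phi ` idx_set L M. h i')"
      by (rule sum.mono_neutral_right[OF finL sub]) (use h0 in auto)
    also have "\<dots> = (\<Sum>i\<in>idx_set L M. h (Phi i))" by (simp add: sum.reindex[OF inj])
    finally show ?thesis .
  qed
  have p'Phi: "p' (Phi i) = pR i" if "i \<in> idx_set L M" for i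
    unfolding p'_def using that the_inv_into_f_f[OF inj that] by auto
  have MM: "MMEam M (\<lambda>x. f (\<lambda>k. x k + z k) / Fb)"
    unfolding MMEam_def
  proof (intro exI[of _ "L * M"] exI[of _ g'] exI[of _ p'] conjI allI impI ballI)
    show "1 \<le> L * M" using L M by simp
  next
    fix j' assume j': "j' \<in> {1..L * M}"
    define k where "k = (j' - 1) div L"
    define j where "j = (j' - 1) mod L + 1"
    have "(j' - 1) mod L < L" using L by (intro mod_less_divisor) simp
    hence j: "j \<in> {1..L}" unfolding j_def by auto
    have k: "k < M" unfolding k_def using j' L by (auto intro!: less_mult_imp_div_less simp: mult.commute)
    have g'j: "g' j' = G k j" unfolding g'_def k_def j_def ..
    show "ME_density (g' j')"
    proof (cases "cc k j > 0")
      case True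
      thus ?thesis unfolding ME_density_def g'j G_def using RLd[OF k j True] by auto
    next
      case False
      have "ME_density_triple (n j) (\<alpha> j) (T j) (t j)" using dens j by auto
      thus ?thesis unfolding ME_density_def g'j G_def gf_def using False
        by (intro exI[of _ "n j"] exI[of _ "\<alpha> j"] exI[of _ "T j"] exI[of _ "t j"]) auto
    qed
  next
    have "(\<Sum>i'\<in>idx_set (L * M) M. p' i') = (\<Sum>i\<in>idx_set L M. p' (Phi i))"
      by (rule sum_p') (simp add: p'_def)
    also have "\<dots> = (\<Sum>i\<in>idx_set L M. pR i)" by (rule sum.cong[OF refl]) (rule p'Phi)
    also have "\<dots> = D / D" unfolding pR_def D_def by (simp only: sum_divide_distrib[symmetric])
    also have "\<dots> = 1" using D0 by simp
    finally show "(\<Sum>i'\<in>idx_set (L * M) M. p' i') = 1" .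
  next
    fix x :: "nat \<Rightarrow> real" assume x: "nonneg_pt M x"
    have "f (\<lambda>k. x k + z k) / Fb = (\<Sum>i\<in>idx_set L M. pR i * (\<Prod>k<M. ME_fun (aRL k (i k)) (T (i k)) (t (i k)) (x k)))"
      by (rule rep[OF x])
    also have "\<dots> = (\<Sum>i\<in>idx_set L M. p' (Phi i) * (\<Prod>k<M. g' (Phi i k) (x k)))"
    proof (rule sum.cong[OF refl])
      fix i assume i: "i \<in> idx_set L M"
      have g'Phi: "g' (Phi i k) (x k) = G k (i k) (x k)" if "k < M" for k
        unfolding Phi_def using that g'enc[OF iL[OF i that]] by simp
      show "pR i * (\<Prod>k<M. ME_fun (aRL k (i k)) (T (i k)) (t (i k)) (x k)) = p' (Phi i) * (\<Prod>k<M. g' (Phi i k) (x k))"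
      proof (cases "pR i = 0")
        case True thus ?thesis using p'Phi[OF i] by simp
      next
        case False
        hence nz: "(\<Prod>k<M. cc k (i k)) \<noteq> 0" unfolding pR_def by auto
        have "cc k (i k) > 0" if "k < M" for k
        proof -
          have "cc k (i k) \<noteq> 0" using nz that by (auto simp: prod_zero_iff)
          thus ?thesis using cc_nonneg[OF that iL[OF i that]] by linarith
        qed
        hence "(\<Prod>k<M. g' (Phi i k) (x k)) = (\<Prod>k<M. ME_fun (aRL k (i k)) (T (i k)) (t (i k)) (x k))"
          by (intro prod.cong[OF refl]) (auto simp: g'Phi G_def)
        thus ?thesis using p'Phi[OF i] by simp
      qed
    qed
    also have "\<dots> = (\<Sum>i'\<in>idx_set (L * M) M. p' i' * (\<Prod>k<M. g' (i' k) (x k)))"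
      by (rule sum_p'[symmetric]) (simp add: p'_def)
    finally show "f (\<lambda>k. x k + z k) / Fb = (\<Sum>i'\<in>idx_set (L * M) M. p' i' * (\<Prod>k<M. g' (i' k) (x k)))" .
  next
    fix x :: "nat \<Rightarrow> real" assume x: "nonneg_pt M x"
    have "nonneg_pt M (\<lambda>k. x k + z k)" using x z_nonneg unfolding nonneg_pt_def by auto
    hence "f (\<lambda>k. x k + z k) \<ge> 0" using f_nonneg by auto
    thus "0 \<le> f (\<lambda>k. x k + z k) / Fb" using D0 FbD by simp
  qed
  show ?thesis
  proof (intro conjI allI impI)
    show "MMEam M (\<lambda>x. f (\<lambda>k. x k + z k) /
        set_lebesgue_integral (PiM {..<M} (\<lambda>_. lborel)) (PiE {..<M} (\<lambda>k. {z k..})) f)"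
      using MM unfolding Fb_def .
    fix x :: "nat \<Rightarrow> real" assume x: "nonneg_pt M x"
    show "f (\<lambda>k. x k + z k) /
        set_lebesgue_integral (PiM {..<M} (\<lambda>_. lborel)) (PiE {..<M} (\<lambda>k. {z k..})) f
        = (\<Sum>i\<in>idx_set L M.
             (p i * (\<Prod>k<M. scalar_prod (\<alpha> (i k)) (mat_exp (z k \<cdot>\<^sub>m T (i k)) *\<^sub>v ME_l (T (i k)) (t (i k))))
              / (\<Sum>h\<in>idx_set L M. p h * (\<Prod>k<M. scalar_prod (\<alpha> (h k)) (mat_exp (z k \<cdot>\<^sub>m T (h k)) *\<^sub>v ME_l (T (h k)) (t (h k))))))
           * (\<Prod>k<M. ME_fun
                ((1 / scalar_prod (\<alpha> (i k)) (mat_exp (z k \<cdot>\<^sub>m T (i k)) *\<^sub>v ME_l (T (i k)) (t (i k))))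
                   \<cdot>\<^sub>v vec_mat (\<alpha> (i k)) (mat_exp (z k \<cdot>\<^sub>m T (i k))))
                (T (i k)) (t (i k)) (x k)))"
      using rep[OF x] unfolding Fb_def pR_def aRL_def D_def cc_def .
  qed
qed

end
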